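(* Let $\alpha=(a_1,\ldots,a_k)$ be a composition of a non-negative integer $n$. Then \[(\zeta^{-1})_-(M_\alpha)=\begin{cases}\dfrac{(-1)^{k(\alpha)}}{2^{2\lfloor k_o(\alpha)/2\rfloor}}\,C\bigl(0,\lfloor k_o(\alpha)/2\rfloor\bigr)&\text{if } a_1\text{ is odd},\\ 0&\text{if } a_1\text{ is even},\end{cases}\] \[(\zeta^{-1})_+(M_\alpha)=\begin{cases}\dfrac{(-1)^{k(\alpha)}}{2^{k_o(\alpha)}}\,C\bigl(0,k_o(\alpha)/2\bigr)&\text{if } n\text{ is even},\\0&\text{if } n\text{ is odd.}\end{cases}\]
   Context: $\Bbbk$ is a field of characteristic $\neq2$. A composition $\alpha=(a_1,\ldots,a_k)$ of $n$ is a sequence of positive integers with sum $n$; $k(\alpha)=k$, and $k_o(\alpha)$, $k_e(\alpha)$ are the numbers of odd and even parts. ${\mathcal{Q}Sym}$ is the graded connected Hopf algebra of quasi-symmetric functions over $\Bbbk$ with monomial basis $M_\alpha=\sum_{i_1<\cdots<i_k}x_{i_1}^{a_1}\cdots x_{i_k}^{a_k}$ ($M_{()}=1$), ordinary product, coproduct $\Delta(M_\alpha)=\sum_{i=0}^kM_{(a_1,\ldots,a_i)}\otimes M_{(a_{i+1},\ldots,a_k)}$. Convolution $\rho\psi=m\circ(\rho\otimes\psi)\circ\Delta$; characters (algebra morphisms to $\Bbbk$) form a group under convolution. For a functional $\varphi$, $\bar\varphi(h)=(-1)^n\varphi(h)$ on homogeneous $h$ of degree $n$; $\varphi$ is even if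 $\bar\varphi=\varphi$, odd if $\bar\varphi=\varphi^{-1}$. Every character $\varphi$ factors uniquely as $\varphi=\varphi_+\varphi_-$ with $\varphi_+$ an even and $\varphi_-$ an odd character. $\zeta$ is the universal character $\zeta(f)=f(1,0,0,\ldots)$ ($\zeta(M_\alpha)=1$ if $\alpha=()$ or $\alpha=(n)$, else $0$), $\zeta^{-1}$ its convolution inverse, and $(\zeta^{-1})_+,(\zeta^{-1})_-$ the even and odd parts of $\zeta^{-1}$. $C(p,q)=\frac{(2p)!(2q)!}{p!(p+q)!q!}$. *)

theory Defs
  imports Main
begin

text \<open>A (linear) functional on QSym is
represented by its values on the monomial basis, i.e. a function on compositions;
we require it to vanish on lists that are not compositions so that functionals
are determined by their values on the basis M_alpha.\<close>

definition is_comp :: "nat list \<Rightarrow> bool" where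
  "is_comp \<alpha> \<longleftrightarrow> (\<forall>a\<in>set \<alpha>. 0 < a)"

definition functional :: "(nat list \<Rightarrow> 'a::field) \<Rightarrow> bool" where
  "functional \<phi> \<longleftrightarrow> (\<forall>\<alpha>. \<not> is_comp \<alpha> \<longrightarrow> \<phi> \<alpha> = 0)"

text \<open>Quasi-shuffle (stuffle) product: M_alpha * M_beta = sum over the list qsh alpha beta.\<close>
fun qsh :: "nat list \<Rightarrow> nat list \<Rightarrow> nat list list" where
  "qsh [] \<beta> = [\<beta>]"
| "qsh \<alpha> [] = [\<alpha>]"
| "qsh (a # \<alpha>) (b # \<beta>) =
     map ((#) a) (qsh \<alpha> (b # \<beta>)) @ map ((#) b) (qsh (a # \<alpha>) \<beta>) @ map ((#) (a + b)) (qsh \<alpha> \<beta>)"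

definition character :: "(nat list \<Rightarrow> 'a::field) \<Rightarrow> bool" where
  "character \<phi> \<longleftrightarrow> functional \<phi> \<and> \<phi> [] = 1 \<and>
     (\<forall>\<alpha> \<beta>. is_comp \<alpha> \<longrightarrow> is_comp \<beta> \<longrightarrow> \<phi> \<alpha> * \<phi> \<beta> = sum_list (map \<phi> (qsh \<alpha> \<beta>)))"

definition conv :: "(nat list \<Rightarrow> 'a::field) \<Rightarrow> (nat list \<Rightarrow> 'a) \<Rightarrow> nat list \<Rightarrow> 'a" where
  "conv \<rho> \<psi> \<alpha> = (if is_comp \<alpha> then (\<Sum>i\<le>length \<alpha>. \<rho> (take i \<alpha>) * \<psi> (drop i \<alpha>)) else 0)"

definition counit :: "nat list \<Rightarrow> 'a::field" where
  "counit \<alpha> = (if \<alpha> = [] then 1 else 0)"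

definition conv_inv :: "(nat list \<Rightarrow> 'a::field) \<Rightarrow> nat list \<Rightarrow> 'a" where
  "conv_inv \<phi> = (THE \<psi>. functional \<psi> \<and> conv \<phi> \<psi> = counit \<and> conv \<psi> \<phi> = counit)"

definition bar :: "(nat list \<Rightarrow> 'a::field) \<Rightarrow> nat list \<Rightarrow> 'a" where
  "bar \<phi> \<alpha> = (-1) ^ sum_list \<alpha> * \<phi> \<alpha>"

definition even_fn :: "(nat list \<Rightarrow> 'a::field) \<Rightarrow> bool" where
  "even_fn \<phi> \<longleftrightarrow> bar \<phi> = \<phi>"

definition odd_fn :: "(nat list \<Rightarrow> 'a::field) \<Rightarrow> bool" where
  "odd_fn \<phi> \<longleftrightarrow> conv (bar \<phi>) \<phi> = counit \<and> conv \<phi> (bar \<phi>) = counit"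

definition even_odd_factors :: "(nat list \<Rightarrow> 'a::field) \<Rightarrow> (nat list \<Rightarrow> 'a) \<times> (nat list \<Rightarrow> 'a)" where
  "even_odd_factors \<phi> = (THE (p, m). character p \<and> character m \<and> even_fn p \<and> odd_fn m \<and> conv p m = \<phi>)"

definition even_part :: "(nat list \<Rightarrow> 'a::field) \<Rightarrow> nat list \<Rightarrow> 'a" where
  "even_part \<phi> = fst (even_odd_factors \<phi>)"

definition odd_part :: "(nat list \<Rightarrow> 'a::field) \<Rightarrow> nat list \<Rightarrow> 'a" where
  "odd_part \<phi> = snd (even_odd_factors \<phi>)"

text \<open>Universal character zeta(f) = f(1,0,0,...).\<close>
definition zeta :: "nat list \<Rightarrow> 'a::field" where
  "zeta \<alpha> = (if is_comp \<alpha> \<and> length \<alpha> \<le> 1 then 1 else 0)"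

definition k_odd :: "nat list \<Rightarrow> nat" where
  "k_odd \<alpha> = length (filter odd \<alpha>)"

definition k_even :: "nat list \<Rightarrow> nat" where
  "k_even \<alpha> = length (filter even \<alpha>)"

text \<open>C(p,q) = (2p)!(2q)!/(p!(p+q)!q!), an integer (super Catalan number), mapped into the field.\<close>
definition Ccoef :: "nat \<Rightarrow> nat \<Rightarrow> 'a::field" where
  "Ccoef p q = of_nat ((fact (2*p) * fact (2*q)) div (fact p * fact (p+q) * fact q))"

end

theory Submission imports Defs "HOL-Computational_Algebra.Formal_Power_Series" begin

definition cv :: "(nat list \<Rightarrow> 'a::field) \<Rightarrow> (nat list \<Rightarrow> 'a) \<Rightarrow> nat list \<Rightarrow> 'a" where
  "cv A B \<alpha> = (\<Sum>i\<le>length \<alpha>. A (take i \<alpha>) * B (drop i \<alpha>))"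

lemma conv_cv: "conv A B \<alpha> = (if is_comp \<alpha> then cv A B \<alpha> else 0)"
  by (simp add: conv_def cv_def)

lemma is_comp_Nil[simp]: "is_comp []" by (simp add: is_comp_def)
lemma is_comp_Cons[simp]: "is_comp (a # \<alpha>) \<longleftrightarrow> 0 < a \<and> is_comp \<alpha>" by (simp add: is_comp_def)
lemma is_comp_append[simp]: "is_comp (\<alpha> @ \<beta>) \<longleftrightarrow> is_comp \<alpha> \<and> is_comp \<beta>" by (auto simp add: is_comp_def)
lemma is_comp_take[intro]: "is_comp \<alpha> \<Longrightarrow> is_comp (take i \<alpha>)"
  by (auto simp add: is_comp_def dest: in_set_takeD)
lemma is_comp_drop[intro]: "is_comp \<alpha> \<Longrightarrow> is_comp (drop i \<alpha>)"
  by (auto simp add: is_comp_def dest: in_set_dropD)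

lemma cv_Nil[simp]: "cv A B [] = A [] * B []" by (simp add: cv_def)

lemma cv_Cons: "cv A B (a # \<beta>) = A [] * B (a # \<beta>) + cv (\<lambda>\<gamma>. A (a # \<gamma>)) B \<beta>"
  unfolding cv_def length_Cons sum.atMost_Suc_shift by simp

lemma cv_snoc: "cv A B (\<beta> @ [a]) = cv A (\<lambda>\<gamma>. B (\<gamma> @ [a])) \<beta> + A (\<beta> @ [a]) * B []"
proof -
  have "cv A B (\<beta> @ [a]) = (\<Sum>i\<le>length \<beta>. A (take i (\<beta>@[a])) * B (drop i (\<beta>@[a]))) + A (\<beta> @ [a]) * B []"
    unfolding cv_def by simp
  also have "(\<Sum>i\<le>length \<beta>. A (take i (\<beta>@[a])) * B (drop i (\<beta>@[a]))) = cv A (\<lambda>\<gamma>. B (\<gamma> @ [a])) \<beta>"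
    unfolding cv_def by (rule sum.cong) auto
  finally show ?thesis .
qed

lemma cv_cong:
  assumes "\<And>i. i \<le> length \<alpha> \<Longrightarrow> A (take i \<alpha>) = A' (take i \<alpha>)"
    and "\<And>i. i \<le> length \<alpha> \<Longrightarrow> B (drop i \<alpha>) = B' (drop i \<alpha>)"
  shows "cv A B \<alpha> = cv A' B' \<alpha>"
  unfolding cv_def using assms by (intro sum.cong) auto

lemma cv_cong_comp:
  assumes "is_comp \<alpha>" "\<And>\<gamma>. is_comp \<gamma> \<Longrightarrow> A \<gamma> = A' \<gamma>" "\<And>\<gamma>. is_comp \<gamma> \<Longrightarrow> B \<gamma> = B' \<gamma>"
  shows "cv A B \<alpha> = cv A' B' \<alpha>"
  using assms by (intro cv_cong) auto

lemma cv_neg_left: "cv (\<lambda>\<gamma>. - A \<gamma>) B \<alpha> = - cv A B \<alpha>"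
  unfolding cv_def by (simp add: sum_negf)

lemma cv_unit_left: "cv (\<lambda>\<gamma>. if \<gamma> = [] then c else 0) B \<beta> = c * B \<beta>"
proof -
  have "cv (\<lambda>\<gamma>. if \<gamma> = [] then c else 0) B \<beta> = (\<Sum>i\<le>length \<beta>. if i = 0 then c * B \<beta> else 0)"
    unfolding cv_def by (rule sum.cong) auto
  then show ?thesis by simp
qed

lemma cv_unit_right: "cv A (\<lambda>\<gamma>. if \<gamma> = [] then c else 0) \<beta> = A \<beta> * c"
proof -
  have "cv A (\<lambda>\<gamma>. if \<gamma> = [] then c else 0) \<beta> = (\<Sum>i\<le>length \<beta>. if i = length \<beta> then A \<beta> * c else 0)"
    unfolding cv_def by (rule sum.cong) auto
  then show ?thesis by simp
qed

lemma cv_split: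
  assumes "\<alpha> \<noteq> []"
  shows "cv A B \<alpha> = A \<alpha> * B [] + A [] * B \<alpha> + (\<Sum>i\<in>{1..<length \<alpha>}. A (take i \<alpha>) * B (drop i \<alpha>))"
proof -
  have n: "0 < length \<alpha>" using assms by simp
  have "cv A B \<alpha> = (\<Sum>i<length \<alpha>. A (take i \<alpha>) * B (drop i \<alpha>)) + A \<alpha> * B []"
    unfolding cv_def lessThan_Suc_atMost[symmetric] by simp
  also have "(\<Sum>i<length \<alpha>. A (take i \<alpha>) * B (drop i \<alpha>)) = A [] * B \<alpha> + (\<Sum>i\<in>{1..<length \<alpha>}. A (take i \<alpha>) * B (drop i \<alpha>))"
    using sum.atLeast_Suc_lessThan[OF n, of "\<lambda>i. A (take i \<alpha>) * B (drop i \<alpha>)"]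
    by (simp add: atLeast0LessThan)
  finally show ?thesis by simp
qed

lemma qsh_Nil2[simp]: "qsh \<alpha> [] = [\<alpha>]" by (cases \<alpha>) auto

lemma qsh_sum: "\<gamma> \<in> set (qsh \<alpha> \<beta>) \<Longrightarrow> sum_list \<gamma> = sum_list \<alpha> + sum_list \<beta>"
  by (induction \<alpha> \<beta> arbitrary: \<gamma> rule: qsh.induct) auto

lemma qsh_comp: "\<gamma> \<in> set (qsh \<alpha> \<beta>) \<Longrightarrow> is_comp \<alpha> \<Longrightarrow> is_comp \<beta> \<Longrightarrow> is_comp \<gamma>"
  by (induction \<alpha> \<beta> arbitrary: \<gamma> rule: qsh.induct) auto

lemma qsh_len: "\<gamma> \<in> set (qsh \<alpha> \<beta>) \<Longrightarrow> length \<alpha> \<le> length \<gamma> \<and> length \<beta> \<le> length \<gamma>"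
proof (induction \<alpha> \<beta> arbitrary: \<gamma> rule: qsh.induct)
  case (3 a \<alpha> b \<beta>)
  from 3(4) consider (i) \<gamma>' where "\<gamma> = a # \<gamma>'" "\<gamma>' \<in> set (qsh \<alpha> (b # \<beta>))"
    | (ii) \<gamma>' where "\<gamma> = b # \<gamma>'" "\<gamma>' \<in> set (qsh (a # \<alpha>) \<beta>)"
    | (iii) \<gamma>' where "\<gamma> = (a + b) # \<gamma>'" "\<gamma>' \<in> set (qsh \<alpha> \<beta>)"
    by auto
  then show ?case
  proof cases
    case i then show ?thesis using 3(1)[of \<gamma>'] by simp
  next
    case ii then show ?thesis using 3(2)[of \<gamma>'] by simp
  next
    case iii then show ?thesis using 3(3)[of \<gamma>'] by simp
  qed
qed auto

lemma qsh_props: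
  "\<gamma> \<in> set (qsh \<alpha> \<beta>) \<Longrightarrow> sum_list \<gamma> = sum_list \<alpha> + sum_list \<beta> \<and> length \<alpha> \<le> length \<gamma> \<and> length \<beta> \<le> length \<gamma>
     \<and> (is_comp \<alpha> \<longrightarrow> is_comp \<beta> \<longrightarrow> is_comp \<gamma>)"
  using qsh_sum qsh_comp qsh_len by blast

definition Q :: "(nat list \<Rightarrow> 'a::field) \<Rightarrow> nat list \<Rightarrow> nat list \<Rightarrow> 'a" where
  "Q A \<alpha> \<beta> = sum_list (map A (qsh \<alpha> \<beta>))"

lemma Q_Nil1[simp]: "Q A [] \<beta> = A \<beta>" by (simp add: Q_def)
lemma Q_Nil2[simp]: "Q A \<alpha> [] = A \<alpha>" by (simp add: Q_def)
lemma Q_Cons: "Q A (a # \<alpha>) (b # \<beta>) = Q (\<lambda>\<gamma>. A (a # \<gamma>)) \<alpha> (b # \<beta>) + Q (\<lambda>\<gamma>. A (b # \<gamma>)) (a # \<alpha>) \<beta>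
   + Q (\<lambda>\<gamma>. A ((a + b) # \<gamma>)) \<alpha> \<beta>"
  by (simp add: Q_def comp_def)

lemma Q_add: "Q (\<lambda>\<gamma>. A \<gamma> + B \<gamma>) \<alpha> \<beta> = Q A \<alpha> \<beta> + Q B \<alpha> \<beta>"
  by (simp add: Q_def sum_list_addf)
lemma Q_mult: "Q (\<lambda>\<gamma>. c * A \<gamma>) \<alpha> \<beta> = c * Q A \<alpha> \<beta>"
  by (simp add: Q_def sum_list_const_mult)
lemma Q_cong: "(\<And>\<gamma>. \<gamma> \<in> set (qsh \<alpha> \<beta>) \<Longrightarrow> A \<gamma> = B \<gamma>) \<Longrightarrow> Q A \<alpha> \<beta> = Q B \<alpha> \<beta>"
  unfolding Q_def by (metis map_cong)

definition pc :: "(nat list \<Rightarrow> nat list \<Rightarrow> 'a::field) \<Rightarrow> (nat list \<Rightarrow> nat list \<Rightarrow> 'a) \<Rightarrow> nat list \<Rightarrow> nat list \<Rightarrow> 'a" where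
  "pc F G \<alpha> \<beta> = (\<Sum>i\<le>length \<alpha>. \<Sum>j\<le>length \<beta>. F (take i \<alpha>) (take j \<beta>) * G (drop i \<alpha>) (drop j \<beta>))"

lemma Q_cv: "Q (cv A B) \<alpha> \<beta> = pc (Q A) (Q B) \<alpha> \<beta>"
proof (induction \<alpha> \<beta> arbitrary: A rule: qsh.induct)
  case (1 \<beta>)
  then show ?case by (simp add: pc_def cv_def)
next
  case (2 a \<alpha>)
  then show ?case by (simp add: pc_def cv_def del: take_Cons' drop_Cons')
next
  case (3 a \<alpha> b \<beta>)
  have cc: "\<And>c x y. Q (\<lambda>\<gamma>. cv A B (c # \<gamma>)) x y = A [] * Q (\<lambda>\<gamma>. B (c # \<gamma>)) x y + Q (cv (\<lambda>\<gamma>. A (c # \<gamma>)) B) x y"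
    by (simp add: cv_Cons Q_add Q_mult)
  have L: "Q (cv A B) (a#\<alpha>) (b#\<beta>) = A [] * Q B (a#\<alpha>) (b#\<beta>)
     + pc (Q (\<lambda>\<gamma>. A (a # \<gamma>))) (Q B) \<alpha> (b#\<beta>)
     + pc (Q (\<lambda>\<gamma>. A (b # \<gamma>))) (Q B) (a#\<alpha>) \<beta>
     + pc (Q (\<lambda>\<gamma>. A ((a+b) # \<gamma>))) (Q B) \<alpha> \<beta>"
    unfolding Q_Cons[of "cv A B"] cc 3[symmetric] Q_Cons[of B] by (simp add: algebra_simps)
  have R: "pc (Q A) (Q B) (a#\<alpha>) (b#\<beta>) = A [] * Q B (a#\<alpha>) (b#\<beta>)
     + pc (Q (\<lambda>\<gamma>. A (a # \<gamma>))) (Q B) \<alpha> (b#\<beta>)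
     + pc (Q (\<lambda>\<gamma>. A (b # \<gamma>))) (Q B) (a#\<alpha>) \<beta>
     + pc (Q (\<lambda>\<gamma>. A ((a+b) # \<gamma>))) (Q B) \<alpha> \<beta>"
    unfolding pc_def length_Cons sum.atMost_Suc_shift
    by (simp add: Q_Cons distrib_right sum.distrib algebra_simps del: Q_Nil1 Q_Nil2) (simp add: mult.commute)
  show ?case using L R by simp
qed

lemma character_Q: "character A \<Longrightarrow> is_comp \<alpha> \<Longrightarrow> is_comp \<beta> \<Longrightarrow> Q A \<alpha> \<beta> = A \<alpha> * A \<beta>"
  unfolding character_def Q_def by simp

lemma characterI:
  assumes "functional A" "A [] = 1" "\<And>\<alpha> \<beta>. is_comp \<alpha> \<Longrightarrow> is_comp \<beta> \<Longrightarrow> A \<alpha> * A \<beta> = Q A \<alpha> \<beta>"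
  shows "character A"
  using assms unfolding character_def Q_def by simp

lemma functional_conv: "functional (conv A B)"
  unfolding functional_def conv_def by simp

lemma Q_conv_cv: "is_comp \<alpha> \<Longrightarrow> is_comp \<beta> \<Longrightarrow> Q (conv A B) \<alpha> \<beta> = Q (cv A B) \<alpha> \<beta>"
  by (rule Q_cong) (use qsh_props in \<open>auto simp: conv_cv\<close>)

lemma character_conv:
  assumes A: "character A" and B: "character B"
  shows "character (conv A B)"
proof (rule characterI)
  show "functional (conv A B)" by (rule functional_conv)
  show "conv A B [] = 1" using A B by (simp add: conv_cv character_def)
  fix \<alpha> \<beta> :: "nat list" assume a: "is_comp \<alpha>" and b: "is_comp \<beta>"
  have "Q (conv A B) \<alpha> \<beta> = pc (Q A) (Q B) \<alpha> \<beta>" using a b by (simp add: Q_conv_cv Q_cv)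
  also have "\<dots> = (\<Sum>i\<le>length \<alpha>. \<Sum>j\<le>length \<beta>. (A (take i \<alpha>) * B (drop i \<alpha>)) * (A (take j \<beta>) * B (drop j \<beta>)))"
    unfolding pc_def using a b A B
    by (intro sum.cong refl) (simp add: character_Q is_comp_take is_comp_drop algebra_simps)
  also have "\<dots> = cv A B \<alpha> * cv A B \<beta>" unfolding cv_def by (simp add: sum_product)
  finally show "conv A B \<alpha> * conv A B \<beta> = Q (conv A B) \<alpha> \<beta>" using a b by (simp add: conv_cv)
qed

lemma character_bar:
  assumes A: "character A"
  shows "character (bar A)"
proof (rule characterI)
  show "functional (bar A)" using A by (simp add: character_def functional_def bar_def)
  show "bar A [] = 1" using A by (simp add: character_def bar_def)
  fix \<alpha> \<beta> :: "nat list" assume a: "is_comp \<alpha>" and b: "is_comp \<beta>"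
  have "Q (bar A) \<alpha> \<beta> = Q (\<lambda>\<gamma>. (-1) ^ (sum_list \<alpha> + sum_list \<beta>) * A \<gamma>) \<alpha> \<beta>"
    by (rule Q_cong) (use qsh_props in \<open>auto simp: bar_def\<close>)
  also have "\<dots> = (-1) ^ (sum_list \<alpha> + sum_list \<beta>) * (A \<alpha> * A \<beta>)"
    by (simp only: Q_mult character_Q[OF A a b])
  finally show "bar A \<alpha> * bar A \<beta> = Q (bar A) \<alpha> \<beta>" by (simp add: bar_def power_add algebra_simps)
qed

lemma pc_sqrt_unique:
  fixes F G :: "nat list \<Rightarrow> nat list \<Rightarrow> 'a::field"
  assumes two: "(2::'a) \<noteq> 0"
    and F0: "F [] [] = 1" and G0: "G [] [] = 1"
    and eq: "\<And>\<alpha> \<beta>. is_comp \<alpha> \<Longrightarrow> is_comp \<beta> \<Longrightarrow> pc F F \<alpha> \<beta> = pc G G \<alpha> \<beta>"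
  shows "is_comp \<alpha> \<Longrightarrow> is_comp \<beta> \<Longrightarrow> F \<alpha> \<beta> = G \<alpha> \<beta>"
proof (induction "length \<alpha> + length \<beta>" arbitrary: \<alpha> \<beta> rule: less_induct)
  case less
  show ?case
  proof (cases "\<alpha> = [] \<and> \<beta> = []")
    case True then show ?thesis using F0 G0 by simp
  next
    case False
    define n where "n = length \<alpha>"
    define m where "m = length \<beta>"
    define S where "S = ({..n} \<times> {..m}) - {(0,0), (n,m)}"
    have nm: "(n, m) \<noteq> (0, 0)" using False unfolding n_def m_def by auto
    have dec: "\<And>H :: nat list \<Rightarrow> nat list \<Rightarrow> 'a. pc H H \<alpha> \<beta> = H [] [] * H \<alpha> \<beta> + H \<alpha> \<beta> * H [] []
        + (\<Sum>(i,j)\<in>S. H (take i \<alpha>) (take j \<beta>) * H (drop i \<alpha>) (drop j \<beta>))"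
    proof -
      fix H :: "nat list \<Rightarrow> nat list \<Rightarrow> 'a"
      let ?g = "\<lambda>(i,j). H (take i \<alpha>) (take j \<beta>) * H (drop i \<alpha>) (drop j \<beta>)"
      have "pc H H \<alpha> \<beta> = (\<Sum>p\<in>{..n} \<times> {..m}. ?g p)"
        unfolding pc_def n_def m_def by (simp add: sum.cartesian_product)
      also have "\<dots> = ?g (0,0) + (\<Sum>p\<in>{..n} \<times> {..m} - {(0,0)}. ?g p)"
        by (rule sum.remove) auto
      also have "(\<Sum>p\<in>{..n} \<times> {..m} - {(0,0)}. ?g p) = ?g (n,m) + (\<Sum>p\<in>{..n} \<times> {..m} - {(0,0)} - {(n,m)}. ?g p)"
        using nm by (intro sum.remove) auto
      also have "{..n} \<times> {..m} - {(0,0)} - {(n,m)} = S" unfolding S_def by auto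
      finally show "pc H H \<alpha> \<beta> = H [] [] * H \<alpha> \<beta> + H \<alpha> \<beta> * H [] []
        + (\<Sum>(i,j)\<in>S. H (take i \<alpha>) (take j \<beta>) * H (drop i \<alpha>) (drop j \<beta>))"
        unfolding n_def m_def by (simp add: add.assoc)
    qed
    have rest: "(\<Sum>(i,j)\<in>S. F (take i \<alpha>) (take j \<beta>) * F (drop i \<alpha>) (drop j \<beta>))
       = (\<Sum>(i,j)\<in>S. G (take i \<alpha>) (take j \<beta>) * G (drop i \<alpha>) (drop j \<beta>))"
    proof (rule sum.cong[OF refl], clarify)
      fix i j assume ij: "(i, j) \<in> S"
      then have i: "i \<le> n" and j: "j \<le> m" and ne1: "(i,j) \<noteq> (0,0)" and ne2: "(i,j) \<noteq> (n,m)"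
        unfolding S_def by auto
      have l1: "length (take i \<alpha>) + length (take j \<beta>) < length \<alpha> + length \<beta>"
        using i j ne2 unfolding n_def m_def by auto
      have l2: "length (drop i \<alpha>) + length (drop j \<beta>) < length \<alpha> + length \<beta>"
        using i j ne1 nm unfolding n_def m_def by auto
      show "F (take i \<alpha>) (take j \<beta>) * F (drop i \<alpha>) (drop j \<beta>) = G (take i \<alpha>) (take j \<beta>) * G (drop i \<alpha>) (drop j \<beta>)"
        using less.hyps[OF l1] less.hyps[OF l2] less.prems is_comp_take is_comp_drop by metis
    qed
    have "2 * F \<alpha> \<beta> = 2 * G \<alpha> \<beta>"
      using eq[OF less.prems] dec[of F] dec[of G] rest F0 G0 by simp
    then show ?thesis using two by simp
  qed
qed

lemma sqrt_character:
  fixes M :: "nat list \<Rightarrow> 'a::field"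
  assumes two: "(2::'a) \<noteq> 0" and X: "character X" and fM: "functional M" and M0: "M [] = 1"
    and sq: "conv M M = X"
  shows "character M"
proof (rule characterI[OF fM M0])
  fix \<alpha> \<beta> :: "nat list" assume a: "is_comp \<alpha>" and b: "is_comp \<beta>"
  have eq: "pc (\<lambda>x y. M x * M y) (\<lambda>x y. M x * M y) \<alpha> \<beta> = pc (Q M) (Q M) \<alpha> \<beta>"
    if a: "is_comp \<alpha>" and b: "is_comp \<beta>" for \<alpha> \<beta>
  proof -
    have "pc (\<lambda>x y. M x * M y) (\<lambda>x y. M x * M y) \<alpha> \<beta> = cv M M \<alpha> * cv M M \<beta>"
      unfolding pc_def cv_def by (simp add: sum_product algebra_simps)
    also have "\<dots> = X \<alpha> * X \<beta>" using a b sq by (auto simp: conv_cv)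
    also have "\<dots> = Q X \<alpha> \<beta>" using character_Q[OF X a b] by simp
    also have "\<dots> = Q (cv M M) \<alpha> \<beta>" using Q_conv_cv[OF a b, of M M] sq by simp
    also have "\<dots> = pc (Q M) (Q M) \<alpha> \<beta>" by (rule Q_cv)
    finally show ?thesis .
  qed
  have "(\<lambda>x y. M x * M y) \<alpha> \<beta> = Q M \<alpha> \<beta>"
    by (rule pc_sqrt_unique[OF two _ _ eq a b]) (simp_all add: M0)
  then show "M \<alpha> * M \<beta> = Q M \<alpha> \<beta>" by simp
qed

definition Vf :: "(nat \<Rightarrow> 'a::field) \<Rightarrow> nat list \<Rightarrow> 'a" where
  "Vf u \<alpha> = (if is_comp \<alpha> then (-1) ^ length \<alpha> * u (k_odd \<alpha>) else 0)"

definition Wf :: "(nat \<Rightarrow> 'a::field) \<Rightarrow> nat list \<Rightarrow> 'a" where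
  "Wf u \<alpha> = (if is_comp \<alpha> \<and> (\<alpha> = [] \<or> odd (hd \<alpha>)) then (-1) ^ length \<alpha> * u (k_odd \<alpha>) else 0)"

definition cauchy :: "(nat \<Rightarrow> 'a::field) \<Rightarrow> (nat \<Rightarrow> 'a) \<Rightarrow> nat \<Rightarrow> 'a" where
  "cauchy u v r = (\<Sum>t\<le>r. u t * v (r - t))"

lemma k_odd_Nil[simp]: "k_odd [] = 0" by (simp add: k_odd_def)
lemma k_odd_Cons[simp]: "k_odd (a # \<beta>) = (if odd a then Suc (k_odd \<beta>) else k_odd \<beta>)"
  by (simp add: k_odd_def)

lemma even_sum_k_odd: "even (sum_list \<alpha>) \<longleftrightarrow> even (k_odd \<alpha>)"
  by (induction \<alpha>) auto

lemma neg_one_pow_cong: "(even n \<longleftrightarrow> even m) \<Longrightarrow> (-1::'a::ring_1) ^ n = (-1) ^ m"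
  by (metis neg_one_even_power neg_one_odd_power)

lemma cauchy_Suc: "cauchy u v (Suc r) = u 0 * v (Suc r) + cauchy (\<lambda>t. u (Suc t)) v r"
  unfolding cauchy_def sum.atMost_Suc_shift by simp

lemma cauchy_commute: "cauchy u v r = cauchy v u r"
proof -
  have "cauchy u v r = (\<Sum>t=0..r. u t * v (r - t))" unfolding cauchy_def atLeast0AtMost ..
  also have "\<dots> = (\<Sum>t=0..r. u (r + 0 - t) * v (r - (r + 0 - t)))"
    by (rule sum.atLeastAtMost_rev)
  also have "\<dots> = cauchy v u r" unfolding cauchy_def atLeast0AtMost
    by (intro sum.cong) auto
  finally show ?thesis .
qed

lemma cv_zero_left: "cv (\<lambda>\<gamma>. 0) B \<alpha> = 0" by (simp add: cv_def)

lemma cV: "is_comp \<alpha> \<Longrightarrow> cv (Vf u) (Wf v) \<alpha> = (-1) ^ length \<alpha> * cauchy u v (k_odd \<alpha>)"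
proof (induction \<alpha> arbitrary: u)
  case Nil then show ?case by (simp add: Vf_def Wf_def cauchy_def)
next
  case (Cons a \<beta>)
  define u' where "u' = (\<lambda>r. u (if odd a then Suc r else r))"
  have a: "0 < a" and b: "is_comp \<beta>" using Cons.prems by auto
  have "cv (\<lambda>\<gamma>. Vf u (a # \<gamma>)) (Wf v) \<beta> = cv (\<lambda>\<gamma>. - Vf u' \<gamma>) (Wf v) \<beta>"
    by (rule cv_cong_comp[OF b]) (auto simp: Vf_def u'_def a)
  also have "\<dots> = - ((-1) ^ length \<beta> * cauchy u' v (k_odd \<beta>))"
    by (simp add: cv_neg_left Cons.IH[OF b])
  finally have T: "cv (\<lambda>\<gamma>. Vf u (a # \<gamma>)) (Wf v) \<beta> = - ((-1) ^ length \<beta> * cauchy u' v (k_odd \<beta>))" .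
  show ?case
  proof (cases "odd a")
    case True
    then show ?thesis unfolding cv_Cons T using a b
      by (simp add: Vf_def Wf_def u'_def cauchy_Suc algebra_simps)
  next
    case False
    then show ?thesis unfolding cv_Cons T using a b
      by (simp add: Vf_def Wf_def u'_def)
  qed
qed

lemma cW: "is_comp \<alpha> \<Longrightarrow> cv (Wf u) (Wf v) \<alpha> = Wf (cauchy u v) \<alpha>"
proof (cases \<alpha>)
  case Nil then show ?thesis by (simp add: Wf_def cauchy_def)
next
  case (Cons a \<beta>)
  assume c: "is_comp \<alpha>"
  show ?thesis
  proof (cases "odd a")
    case True
    have "cv (Wf u) (Wf v) \<alpha> = cv (Vf u) (Wf v) \<alpha>"
    proof (rule cv_cong)
      fix i assume "i \<le> length \<alpha>"
      show "Wf u (take i \<alpha>) = Vf u (take i \<alpha>)"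
        using c True Cons by (cases i) (auto simp: Wf_def Vf_def is_comp_take)
    qed simp
    then show ?thesis using cV[OF c] c True Cons by (simp add: Wf_def)
  next
    case False
    have "cv (\<lambda>\<gamma>. Wf u (a # \<gamma>)) (Wf v) \<beta> = cv (\<lambda>\<gamma>. 0) (Wf v) \<beta>"
      by (rule cv_cong) (simp_all add: Wf_def False)
    then show ?thesis using False Cons by (simp add: cv_Cons cv_zero_left Wf_def)
  qed
qed

lemma bar_Vf: "bar (Vf u) = Vf (\<lambda>r. (-1) ^ r * u r)"
  by (rule ext) (simp add: bar_def Vf_def neg_one_pow_cong[OF even_sum_k_odd])

lemma bar_Wf: "bar (Wf u) = Wf (\<lambda>r. (-1) ^ r * u r)"
proof (rule ext)
  fix \<alpha> :: "nat list"
  have "(-1::'a) ^ sum_list \<alpha> = (-1) ^ k_odd \<alpha>" by (rule neg_one_pow_cong[OF even_sum_k_odd])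
  then show "bar (Wf u) \<alpha> = Wf (\<lambda>r. (-1) ^ r * u r) \<alpha>"
    unfolding bar_def Wf_def by auto
qed

lemma conv_VW: "conv (Vf u) (Wf v) = Vf (cauchy u v)"
  by (rule ext) (simp add: conv_cv cV Vf_def)

lemma conv_WW: "conv (Wf u) (Wf v) = Wf (cauchy u v)"
  by (rule ext) (simp add: conv_cv cW Wf_def)

lemma counit_Wf: "(counit :: nat list \<Rightarrow> 'a::field) = Wf (\<lambda>r. if r = 0 then 1 else 0)"
proof (rule ext)
  fix \<alpha> :: "nat list"
  show "(counit \<alpha> :: 'a) = Wf (\<lambda>r. if r = 0 then 1 else 0) \<alpha>"
    by (cases \<alpha>) (auto simp: counit_def Wf_def)
qed

lemma functional_Vf: "functional (Vf u)" by (simp add: functional_def Vf_def)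
lemma functional_Wf: "functional (Wf u)" by (simp add: functional_def Wf_def)

abbreviation V1 :: "nat list \<Rightarrow> 'a::field" where "V1 \<equiv> Vf (\<lambda>_. 1)"

lemma V1_Cons: "0 < a \<Longrightarrow> (V1 (a # \<gamma>) :: 'a::field) = - V1 \<gamma>"
  by (simp add: Vf_def)

lemma zeta_Nil[simp]: "zeta [] = 1" by (simp add: zeta_def)

lemma cv_zeta_Cons: "0 < a \<Longrightarrow> is_comp \<beta> \<Longrightarrow> cv zeta B (a # \<beta>) = B (a # \<beta>) + B \<beta>"
proof -
  assume a: "0 < a" and b: "is_comp \<beta>"
  have "cv (\<lambda>\<gamma>. zeta (a # \<gamma>)) B \<beta> = cv (\<lambda>\<gamma>. if \<gamma> = [] then 1 else 0) B \<beta>"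
    by (rule cv_cong_comp[OF b]) (auto simp: zeta_def a)
  then show ?thesis by (simp add: cv_Cons cv_unit_left)
qed

lemma cv_zeta_snoc: "0 < a \<Longrightarrow> is_comp \<beta> \<Longrightarrow> cv A zeta (\<beta> @ [a]) = A \<beta> + A (\<beta> @ [a])"
proof -
  assume a: "0 < a" and b: "is_comp \<beta>"
  have "cv A (\<lambda>\<gamma>. zeta (\<gamma> @ [a])) \<beta> = cv A (\<lambda>\<gamma>. if \<gamma> = [] then 1 else 0) \<beta>"
    by (rule cv_cong_comp[OF b]) (auto simp: zeta_def a)
  then show ?thesis by (simp add: cv_snoc cv_unit_right)
qed

lemma conv_zeta_V1: "conv zeta V1 = (counit :: nat list \<Rightarrow> 'a::field)"
proof (rule ext)
  fix \<alpha> :: "nat list"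
  show "conv zeta V1 \<alpha> = (counit \<alpha> :: 'a)"
  proof (cases \<alpha>)
    case Nil then show ?thesis by (simp add: conv_cv counit_def Vf_def)
  next
    case (Cons a \<beta>) then show ?thesis
      by (auto simp: conv_cv counit_def cv_zeta_Cons V1_Cons)
  qed
qed

lemma conv_V1_zeta: "conv V1 zeta = (counit :: nat list \<Rightarrow> 'a::field)"
proof (rule ext)
  fix \<alpha> :: "nat list"
  show "conv V1 zeta \<alpha> = (counit \<alpha> :: 'a)"
  proof (cases \<alpha> rule: rev_exhaust)
    case Nil then show ?thesis by (simp add: conv_cv counit_def Vf_def)
  next
    case (snoc \<beta> a) then show ?thesis
      by (auto simp: conv_cv counit_def cv_zeta_snoc Vf_def k_odd_def)
  qed
qed

lemma zeta_inv_unique: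
  assumes f: "functional \<psi>" and c: "conv zeta \<psi> = (counit :: nat list \<Rightarrow> 'a::field)"
  shows "\<psi> = V1"
proof (rule ext)
  fix \<alpha> :: "nat list"
  show "\<psi> \<alpha> = V1 \<alpha>"
  proof (cases "is_comp \<alpha>")
    case False then show ?thesis using f by (simp add: functional_def Vf_def)
  next
    case True then show ?thesis
    proof (induction \<alpha>)
      case Nil
      have "conv zeta \<psi> [] = (counit [] :: 'a)" using c by simp
      then show ?case by (simp add: conv_cv counit_def Vf_def)
    next
      case (Cons a \<beta>)
      have "conv zeta \<psi> (a # \<beta>) = (counit (a # \<beta>) :: 'a)" using c by simp
      then have "\<psi> (a # \<beta>) + \<psi> \<beta> = 0" using Cons.prems by (simp add: conv_cv cv_zeta_Cons counit_def)
      then show ?case using Cons by (simp add: V1_Cons eq_neg_iff_add_eq_0)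
    qed
  qed
qed

lemma conv_inv_zeta: "conv_inv (zeta :: nat list \<Rightarrow> 'a::field) = V1"
  unfolding conv_inv_def
proof (rule the_equality)
  show "functional (V1 :: nat list \<Rightarrow> 'a) \<and> conv zeta V1 = counit \<and> conv V1 zeta = (counit :: nat list \<Rightarrow> 'a)"
    by (simp add: functional_Vf conv_zeta_V1 conv_V1_zeta)
  fix \<psi> :: "nat list \<Rightarrow> 'a" assume "functional \<psi> \<and> conv zeta \<psi> = counit \<and> conv \<psi> zeta = counit"
  then show "\<psi> = V1" using zeta_inv_unique by blast
qed

lemma qsh_long: "\<gamma> \<in> set (qsh \<alpha> \<beta>) \<Longrightarrow> length \<gamma> \<ge> length \<alpha> \<and> length \<gamma> \<ge> length \<beta>"
  using qsh_props by blast

lemma character_zeta: "character (zeta :: nat list \<Rightarrow> 'a::field)"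
proof (rule characterI)
  show "functional (zeta :: nat list \<Rightarrow> 'a)" by (simp add: functional_def zeta_def)
  show "(zeta [] :: 'a) = 1" by simp
  fix \<alpha> \<beta> :: "nat list" assume a: "is_comp \<alpha>" and b: "is_comp \<beta>"
  show "(zeta \<alpha> :: 'a) * zeta \<beta> = Q zeta \<alpha> \<beta>"
  proof (cases "\<alpha> = [] \<or> \<beta> = []")
    case True then show ?thesis by auto
  next
    case False
    then obtain x \<alpha>' y \<beta>' where ab: "\<alpha> = x # \<alpha>'" "\<beta> = y # \<beta>'" by (meson list.exhaust)
    show ?thesis
    proof (cases "\<alpha>' = [] \<and> \<beta>' = []")
      case True then show ?thesis using a b ab by (simp add: Q_def zeta_def)
    next
      case False
      have "Q zeta \<alpha> \<beta> = Q (\<lambda>_. 0 :: 'a) \<alpha> \<beta>"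
      proof (rule Q_cong)
        fix \<gamma> assume "\<gamma> \<in> set (qsh \<alpha> \<beta>)"
        then have "length \<gamma> \<ge> length \<alpha> \<and> length \<gamma> \<ge> length \<beta>" by (rule qsh_long)
        moreover have "length \<alpha> \<ge> 2 \<or> length \<beta> \<ge> 2" using False ab by (cases \<alpha>'; cases \<beta>') auto
        ultimately have "length \<gamma> \<ge> 2" by linarith
        then show "(zeta \<gamma> :: 'a) = 0" by (simp add: zeta_def)
      qed
      moreover have "(zeta \<alpha> :: 'a) * zeta \<beta> = 0" using False ab by (auto simp: zeta_def)
      ultimately show ?thesis by (simp add: Q_def)
    qed
  qed
qed

lemma Q_neg: "Q (\<lambda>\<gamma>. - A \<gamma>) \<alpha> \<beta> = - Q A \<alpha> \<beta>"
  using Q_mult[of "-1" A] by simp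

lemma Q_V1: "is_comp \<alpha> \<Longrightarrow> is_comp \<beta> \<Longrightarrow> Q (V1 :: nat list \<Rightarrow> 'a::field) \<alpha> \<beta> = (-1) ^ (length \<alpha> + length \<beta>)"
proof (induction \<alpha> \<beta> rule: qsh.induct)
  case (1 \<beta>) then show ?case by (simp add: Vf_def)
next
  case (2 a \<alpha>) then show ?case by (simp add: Vf_def)
next
  case (3 a \<alpha> b \<beta>)
  have e: "\<And>c x y. 0 < c \<Longrightarrow> is_comp x \<Longrightarrow> is_comp y \<Longrightarrow> Q (\<lambda>\<gamma>. (V1 :: nat list \<Rightarrow> 'a) (c # \<gamma>)) x y = - Q V1 x y"
  proof -
    fix c x y assume "0 < (c::nat)" "is_comp x" "is_comp y"
    then have "Q (\<lambda>\<gamma>. (V1 :: nat list \<Rightarrow> 'a) (c # \<gamma>)) x y = Q (\<lambda>\<gamma>. - V1 \<gamma>) x y"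
      by (intro Q_cong) (use qsh_props in \<open>auto simp: Vf_def\<close>)
    then show "Q (\<lambda>\<gamma>. (V1 :: nat list \<Rightarrow> 'a) (c # \<gamma>)) x y = - Q V1 x y" by (simp add: Q_neg)
  qed
  show ?case using 3 by (simp add: Q_Cons e)
qed

lemma character_V1: "character (V1 :: nat list \<Rightarrow> 'a::field)"
proof (rule characterI)
  show "functional (V1 :: nat list \<Rightarrow> 'a)" by (rule functional_Vf)
  show "(V1 [] :: 'a) = 1" by (simp add: Vf_def)
  fix \<alpha> \<beta> :: "nat list" assume a: "is_comp \<alpha>" and b: "is_comp \<beta>"
  show "(V1 \<alpha> :: 'a) * V1 \<beta> = Q V1 \<alpha> \<beta>" using a b by (simp add: Q_V1 Vf_def power_add)
qed

lemma chi_Wf: "conv (bar zeta) V1 = (Wf (\<lambda>r. if r = 0 then 1 else 2) :: nat list \<Rightarrow> 'a::field)"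
proof (rule ext)
  fix \<alpha> :: "nat list"
  show "conv (bar zeta) V1 \<alpha> = (Wf (\<lambda>r. if r = 0 then 1 else 2) \<alpha> :: 'a)"
  proof (cases \<alpha>)
    case Nil then show ?thesis by (simp add: conv_cv bar_def Vf_def Wf_def)
  next
    case (Cons a \<beta>)
    show ?thesis
    proof (cases "is_comp \<alpha>")
      case False then show ?thesis by (simp add: conv_cv Wf_def)
    next
      case True
      then have a: "0 < a" and b: "is_comp \<beta>" using Cons by auto
      have "cv (\<lambda>\<gamma>. bar zeta (a # \<gamma>)) (V1 :: nat list \<Rightarrow> 'a) \<beta> = cv (\<lambda>\<gamma>. if \<gamma> = [] then (-1)^a else 0) V1 \<beta>"
        by (rule cv_cong_comp[OF b]) (auto simp: zeta_def bar_def a)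
      then have "conv (bar zeta) V1 \<alpha> = (-1) ^ Suc (length \<beta>) + (-1) ^ a * ((-1) ^ length \<beta> :: 'a)"
        using True Cons b by (simp add: conv_cv cv_Cons cv_unit_left bar_def Vf_def)
      then show ?thesis using True Cons by (cases "odd a") (auto simp: Wf_def)
    qed
  qed
qed

lemma central_binom_rec: "(k+1) * ((2*k+2) choose (k+1)) = 2*(2*k+1) * ((2*k) choose k)"
proof -
  have 1: "Suc k * (Suc (2*k+1) choose Suc k) = Suc (2*k+1) * ((2*k+1) choose k)"
    by (rule Suc_times_binomial)
  have 2: "Suc (2*k) * ((2*k) choose k) = (Suc (2*k) choose Suc k) * Suc k"
    by (rule Suc_times_binomial_eq)
  have 3: "(Suc (2*k) choose Suc k) = (Suc (2*k) choose k)"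
    using binomial_symmetric[of "Suc k" "Suc (2*k)"] by simp
  from 1 have "(k+1) * ((2*k+2) choose (k+1)) = 2*(k+1) * ((2*k+1) choose k)" by simp
  also have "\<dots> = 2 * ((Suc (2*k) choose Suc k) * Suc k)" using 3 by simp
  also have "\<dots> = 2*(2*k+1) * ((2*k) choose k)" using 2 by simp
  finally show ?thesis .
qed

lemma gchoose_half: "((-1/2::real) gchoose k) = (-1/4)^k * real ((2*k) choose k)"
proof (induction k)
  case 0 then show ?case by simp
next
  case (Suc k)
  have a: "fact (Suc k) * ((-1/2::real) gchoose Suc k) = fact k * ((-1/2::real) gchoose k) * (-1/2 - real k)"
  proof -
    have "fact (Suc k) * ((-1/2::real) gchoose Suc k) = (\<Prod>i = 0..<Suc k. -1/2 - of_nat i)"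
      by (rule gbinomial_mult_fact)
    also have "\<dots> = (\<Prod>i = 0..<k. -1/2 - of_nat i) * (-1/2 - real k)"
      by (simp add: prod.atLeast0_lessThan_Suc)
    also have "(\<Prod>i = 0..<k. -1/2 - of_nat i) = fact k * ((-1/2::real) gchoose k)"
      by (rule gbinomial_mult_fact[symmetric])
    finally show ?thesis .
  qed
  obtain B' where B': "B' = real ((2*k+2) choose (k+1))" by blast
  have b: "real (k+1) * B' = 2*(2*real k+1) * real ((2*k) choose k)"
    unfolding B' using arg_cong[OF central_binom_rec[of k], of real] by (simp only: of_nat_mult of_nat_add of_nat_numeral of_nat_1)
  have f: "fact (Suc k) = real (k+1) * fact k" by simp
  have fk: "(fact k::real) \<noteq> 0" by simp
  have g: "((-1/2::real) gchoose Suc k) = ((-1/2::real) gchoose k) * (-1/2 - real k) / real (k+1)"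
  proof -
    have "fact k * (real (k+1) * ((-1/2::real) gchoose Suc k)) = fact k * (((-1/2::real) gchoose k) * (-1/2 - real k))"
      using a unfolding f by (metis mult.assoc mult.commute)
    then have "real (k+1) * ((-1/2::real) gchoose Suc k) = ((-1/2::real) gchoose k) * (-1/2 - real k)"
      using fk by simp
    then show ?thesis by (simp add: field_simps)
  qed
  have B'': "B' = 2*(2*real k+1) * real ((2*k) choose k) / real (k+1)"
    using b by (simp add: field_simps)
  have "((-1/2::real) gchoose Suc k) = (-1/4)^Suc k * B'"
    unfolding g B'' Suc by (simp add: field_simps power_Suc)
  then show ?case using B' by simp
qed

lemma central_binom_conv: "(\<Sum>a\<le>q. ((2*a) choose a) * ((2*(q-a)) choose (q-a))) = 4^q"
proof -
  have "(\<Sum>k=0..q. ((-1/2::real) gchoose k) * ((-1/2) gchoose (q - k))) = (-1/2 + -1/2) gchoose q"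
    by (rule gbinomial_Vandermonde)
  also have "\<dots> = (-1)^q" using gbinomial_minus[of "1::real" q] by (simp add: binomial_gbinomial[symmetric])
  finally have V: "(\<Sum>k=0..q. ((-1/2::real) gchoose k) * ((-1/2) gchoose (q - k))) = (-1)^q" .
  have "(\<Sum>k=0..q. ((-1/2::real) gchoose k) * ((-1/2) gchoose (q - k))) =
        (\<Sum>k=0..q. (-1/4::real)^q * (real ((2*k) choose k) * real ((2*(q-k)) choose (q-k))))"
  proof (rule sum.cong)
    fix k assume "k \<in> {0..q}"
    then have "(-1/4::real)^q = (-1/4)^k * (-1/4)^(q-k)" by (simp add: power_add[symmetric])
    then show "((-1/2::real) gchoose k) * ((-1/2) gchoose (q - k)) =
        (-1/4::real)^q * (real ((2*k) choose k) * real ((2*(q-k)) choose (q-k)))"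
      unfolding gchoose_half by simp
  qed simp
  with V have "(\<Sum>k=0..q. (-1/4::real)^q * (real ((2*k) choose k) * real ((2*(q-k)) choose (q-k)))) = (-1)^q"
    by simp
  then have "(-1/4::real)^q * real (\<Sum>k\<le>q. ((2*k) choose k) * ((2*(q-k)) choose (q-k))) = (-1)^q"
    by (simp add: sum_distrib_left atLeast0AtMost)
  then have E: "(-1/4::real)^q * real (\<Sum>k\<le>q. ((2*k) choose k) * ((2*(q-k)) choose (q-k))) * 4^q = (-1)^q * 4^q"
    by simp
  define S where "S = real (\<Sum>k\<le>q. ((2*k) choose k) * ((2*(q-k)) choose (q-k)))"
  have P: "(-1/4::real)^q * 4^q = (-1)^q" by (simp add: power_mult_distrib[symmetric])
  have "(-1::real)^q * S = ((-1/4)^q * 4^q) * S" by (simp only: P)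
  also have "\<dots> = (-1/4::real)^q * S * 4^q" by (simp only: mult.assoc mult.commute mult.left_commute)
  also have "\<dots> = (-1)^q * 4^q" using E unfolding S_def .
  finally have "(-1::real)^q * real (\<Sum>k\<le>q. ((2*k) choose k) * ((2*(q-k)) choose (q-k))) = (-1)^q * 4^q"
    unfolding S_def .
  then have "real (\<Sum>k\<le>q. ((2*k) choose k) * ((2*(q-k)) choose (q-k))) = real (4^q)"
    by simp
  then show ?thesis by (simp only: of_nat_eq_iff)
qed

definition cc :: "nat \<Rightarrow> 'a::field" where
  "cc q = of_nat ((2*q) choose q) / 2 ^ (2*q)"

lemma cc_conv:
  assumes two: "(2::'a::field) \<noteq> 0"
  shows "(\<Sum>a\<le>q. cc a * cc (q - a) :: 'a) = 1"
proof -
  have "(\<Sum>a\<le>q. cc a * cc (q - a) :: 'a) = (\<Sum>a\<le>q. of_nat (((2*a) choose a) * ((2*(q-a)) choose (q-a))) / 2 ^ (2*q))"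
  proof (rule sum.cong[OF refl])
    fix a assume "a \<in> {..q}"
    then have e: "2*q = 2*a + 2*(q-a)" by simp
    have "(2::'a) ^ (2*q) = 2 ^ (2*a) * 2 ^ (2*(q-a))" by (simp only: power_add[symmetric] e[symmetric])
    then show "cc a * cc (q - a) = (of_nat (((2*a) choose a) * ((2*(q-a)) choose (q-a))) / 2 ^ (2*q) :: 'a)"
      by (simp add: cc_def)
  qed
  also have "\<dots> = of_nat (\<Sum>a\<le>q. ((2*a) choose a) * ((2*(q-a)) choose (q-a))) / 2 ^ (2*q)"
    by (simp add: sum_divide_distrib)
  also have "\<dots> = of_nat (4 ^ q) / 2 ^ (2 * q)" by (simp only: central_binom_conv)
  also have "(of_nat (4 ^ q) :: 'a) = 2 ^ (2 * q)" by (simp add: power_mult)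
  also have "(2::'a) ^ (2 * q) / 2 ^ (2 * q) = 1" using two by simp
  finally show ?thesis .
qed

lemma cc0[simp]: "cc 0 = 1" by (simp add: cc_def)

lemma sum_even_odd: "(\<Sum>t<2*n. f t) = (\<Sum>a<n. f (2*a) + f (2*a+1))" for n :: nat and f :: "nat \<Rightarrow> 'a::comm_monoid_add"
  by (induction n) (simp_all add: add.assoc)

lemma cauchy_even: "cauchy u v (2*q) = (\<Sum>a<q. u (2*a) * v (2*q - 2*a) + u (2*a+1) * v (2*q - (2*a+1))) + u (2*q) * v 0"
  unfolding cauchy_def lessThan_Suc_atMost[symmetric] by (simp add: sum_even_odd)

lemma cauchy_odd: "cauchy u v (Suc (2*q)) = (\<Sum>a<Suc q. u (2*a) * v (Suc (2*q) - 2*a) + u (2*a+1) * v (Suc (2*q) - (2*a+1)))"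
proof -
  have "cauchy u v (Suc (2*q)) = (\<Sum>t<2 * Suc q. u t * v (Suc (2*q) - t))"
    unfolding cauchy_def lessThan_Suc_atMost[symmetric] by simp
  then show ?thesis by (simp only: sum_even_odd)
qed

lemma nat_parity_cases: obtains q where "r = 2*q" | q where "r = Suc (2*q)"
  by (metis oddE evenE Suc_eq_plus1)

definition mm :: "nat \<Rightarrow> 'a::field" where "mm r = cc (r div 2)"
definition mm' :: "nat \<Rightarrow> 'a::field" where "mm' r = (-1) ^ r * cc (r div 2)"
definition pp :: "nat \<Rightarrow> 'a::field" where "pp r = (if even r then cc (r div 2) else 0)"

lemma div_facts: "a < q \<Longrightarrow> (2*q - 2*a) div 2 = q - a" "a < q \<Longrightarrow> (2*q - (2*a+1)) div 2 = q - 1 - a"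
  "a < Suc q \<Longrightarrow> (Suc (2*q) - 2*a) div 2 = q - a" "a < Suc q \<Longrightarrow> (Suc (2*q) - (2*a+1)) div 2 = q - a"
  "a < q \<Longrightarrow> (2*q - Suc (2*a)) div 2 = q - Suc a" "a < Suc q \<Longrightarrow> (Suc (2*q) - Suc (2*a)) div 2 = q - a"
  "a < Suc q \<Longrightarrow> (2*q - 2*a) div 2 = q - a"
  by presburger+

lemma cc_conv_lt:
  assumes two: "(2::'a::field) \<noteq> 0"
  shows "(\<Sum>a<q. cc a * cc (q - a) :: 'a) + cc q * cc 0 = 1"
  using cc_conv[OF two, of q] by (simp add: lessThan_Suc_atMost[symmetric])

lemma cc_conv_pred:
  assumes two: "(2::'a::field) \<noteq> 0"
  shows "(\<Sum>a<q. cc a * cc (q - 1 - a) :: 'a) = (if q = 0 then 0 else 1)"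
proof (cases q)
  case 0 then show ?thesis by simp
next
  case (Suc q') then show ?thesis using cc_conv[OF two, of q'] by (simp add: lessThan_Suc_atMost)
qed

lemma N1:
  assumes two: "(2::'a::field) \<noteq> 0"
  shows "cauchy mm mm r = (if r = 0 then 1 else (2::'a))"
proof (cases r rule: nat_parity_cases)
  case (1 q)
  have "cauchy mm mm r = (\<Sum>a<q. cc a * cc (q - a) + cc a * cc (q - 1 - a)) + cc q * (cc 0 :: 'a)"
    unfolding 1 cauchy_even mm_def
    by (intro arg_cong2[where f = "(+)"] sum.cong refl) (simp_all add: div_facts)
  also have "\<dots> = (if r = 0 then 1 else 2)"
    using cc_conv_lt[OF two, of q] cc_conv_pred[OF two, of q] 1 by (simp add: sum.distrib)
  finally show ?thesis .
next
  case (2 q)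
  have "cauchy mm mm r = (\<Sum>a<Suc q. cc a * cc (q - a) + cc a * (cc (q - a) :: 'a))"
    unfolding 2 cauchy_odd mm_def
    by (intro sum.cong refl) (simp add: div_facts)
  also have "\<dots> = 2" using cc_conv[OF two, of q] 2 by (simp add: sum.distrib lessThan_Suc_atMost flip: sum_distrib_left)
  finally show ?thesis using 2 by simp
qed

lemma N3:
  assumes two: "(2::'a::field) \<noteq> 0"
  shows "cauchy mm' mm r = (if r = 0 then 1 else (0::'a))"
proof (cases r rule: nat_parity_cases)
  case (1 q)
  have "cauchy mm' mm r = (\<Sum>a<q. cc a * cc (q - a) - cc a * cc (q - 1 - a)) + cc q * (cc 0 :: 'a)"
    unfolding 1 cauchy_even mm_def mm'_def
    by (intro arg_cong2[where f = "(+)"] sum.cong refl) (simp_all add: div_facts)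
  also have "\<dots> = (if r = 0 then 1 else 0)"
  proof -
    define S where "S = (\<Sum>a<q. cc a * cc (q - a) :: 'a)"
    have h1: "S + cc q = 1" using cc_conv_lt[OF two, of q] by (simp add: S_def)
    have h2: "(\<Sum>a<q. cc a * cc (q - 1 - a) :: 'a) = (if q = 0 then 0 else 1)" by (rule cc_conv_pred[OF two])
    have "(\<Sum>a<q. cc a * cc (q - a) - cc a * cc (q - 1 - a)) + cc q * (cc 0 :: 'a)
        = (S + cc q) - (\<Sum>a<q. cc a * cc (q - 1 - a))"
      by (simp add: S_def sum_subtractf algebra_simps)
    also have "\<dots> = (if r = 0 then 1 else 0)" using h1 h2 1 by simp
    finally show ?thesis .
  qed
  finally show ?thesis .
next
  case (2 q)
  have "cauchy mm' mm r = (\<Sum>a<Suc q. cc a * cc (q - a) - cc a * (cc (q - a) :: 'a))"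
    unfolding 2 cauchy_odd mm_def mm'_def
    by (intro sum.cong refl) (simp add: div_facts)
  also have "\<dots> = 0" by simp
  finally show ?thesis using 2 by simp
qed

lemma N2:
  assumes two: "(2::'a::field) \<noteq> 0"
  shows "cauchy pp mm r = (1::'a)"
proof (cases r rule: nat_parity_cases)
  case (1 q)
  have "cauchy pp mm r = (\<Sum>a<q. cc a * cc (q - a)) + cc q * (cc 0 :: 'a)"
    unfolding 1 cauchy_even mm_def pp_def
    by (intro arg_cong2[where f = "(+)"] sum.cong refl) (simp_all add: div_facts)
  also have "\<dots> = 1" using cc_conv_lt[OF two, of q] by simp
  finally show ?thesis .
next
  case (2 q)
  have "cauchy pp mm r = (\<Sum>a<Suc q. cc a * (cc (q - a) :: 'a))"
    unfolding 2 cauchy_odd mm_def pp_def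
    by (intro sum.cong refl) (simp add: div_facts)
  also have "\<dots> = 1" using cc_conv[OF two, of q] by (simp add: lessThan_Suc_atMost)
  finally show ?thesis .
qed

lemma N4: "cauchy (\<lambda>_. 1) mm' r = (pp r :: 'a::field)"
proof -
  have "cauchy (\<lambda>_. 1) mm' r = cauchy mm' (\<lambda>_. 1) r" by (rule cauchy_commute)
  also have "\<dots> = pp r"
  proof (cases r rule: nat_parity_cases)
    case (1 q)
    show ?thesis unfolding 1 cauchy_even mm'_def pp_def by simp
  next
    case (2 q)
    show ?thesis unfolding 2 cauchy_odd mm'_def pp_def by simp
  qed
  finally show ?thesis .
qed

lemma factor_unique:
  fixes p m P M :: "nat list \<Rightarrow> 'a::field"
  assumes two: "(2::'a) \<noteq> 0"
    and cp: "character p" and cm: "character m" and ep: "even_fn p" and om: "odd_fn m" and pm: "conv p m = \<phi>"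
    and cP: "character P" and cM: "character M" and eP: "even_fn P" and oM: "odd_fn M" and PM: "conv P M = \<phi>"
  shows "p = P \<and> m = M"
proof -
  have p0: "p [] = 1" and m0: "m [] = 1" and P0: "P [] = 1" and M0: "M [] = 1"
    using cp cm cP cM by (simp_all add: character_def)
  have main: "p \<alpha> = P \<alpha> \<and> m \<alpha> = M \<alpha>" if "is_comp \<alpha>" for \<alpha>
    using that
  proof (induction "length \<alpha>" arbitrary: \<alpha> rule: less_induct)
    case less
    show ?case
    proof (cases "\<alpha> = []")
      case True then show ?thesis using p0 m0 P0 M0 by simp
    next
      case False
      let ?I = "{1..<length \<alpha>}"
      have IH: "p (take i \<alpha>) = P (take i \<alpha>) \<and> m (take i \<alpha>) = M (take i \<alpha>) \<and>
                p (drop i \<alpha>) = P (drop i \<alpha>) \<and> m (drop i \<alpha>) = M (drop i \<alpha>)" if "i \<in> ?I" for i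
      proof -
        have l1: "length (take i \<alpha>) < length \<alpha>" and l2: "length (drop i \<alpha>) < length \<alpha>" using that by auto
        have h1: "p (take i \<alpha>) = P (take i \<alpha>) \<and> m (take i \<alpha>) = M (take i \<alpha>)"
          by (rule less.hyps[OF l1 is_comp_take[OF less.prems]])
        have h2: "p (drop i \<alpha>) = P (drop i \<alpha>) \<and> m (drop i \<alpha>) = M (drop i \<alpha>)"
          by (rule less.hyps[OF l2 is_comp_drop[OF less.prems]])
        show ?thesis using h1 h2 by blast
      qed
      define S1 where "S1 = (\<Sum>i\<in>?I. p (take i \<alpha>) * m (drop i \<alpha>))"
      define S2 where "S2 = (\<Sum>i\<in>?I. bar m (take i \<alpha>) * m (drop i \<alpha>))"
      have S1': "S1 = (\<Sum>i\<in>?I. P (take i \<alpha>) * M (drop i \<alpha>))"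
        unfolding S1_def by (rule sum.cong) (use IH in auto)
      have S2': "S2 = (\<Sum>i\<in>?I. bar M (take i \<alpha>) * M (drop i \<alpha>))"
        unfolding S2_def bar_def by (rule sum.cong) (use IH in auto)
      have c1: "cv p m \<alpha> = \<phi> \<alpha>" using pm less.prems conv_cv[of p m \<alpha>] by simp
      have c2: "cv P M \<alpha> = \<phi> \<alpha>" using PM less.prems conv_cv[of P M \<alpha>] by simp
      have E1: "p \<alpha> + m \<alpha> + S1 = \<phi> \<alpha>"
        using c1 cv_split[OF False, of p m] p0 m0 by (simp add: S1_def)
      have E1': "P \<alpha> + M \<alpha> + S1 = \<phi> \<alpha>"
        using c2 cv_split[OF False, of P M] P0 M0 by (simp add: S1')
      have cu: "counit \<alpha> = (0::'a)" using False by (simp add: counit_def)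
      have bm: "bar m \<alpha> = (-1) ^ sum_list \<alpha> * m \<alpha>" "bar m [] = 1" "bar M \<alpha> = (-1) ^ sum_list \<alpha> * M \<alpha>" "bar M [] = 1"
        using m0 M0 by (simp_all add: bar_def)
      have "conv (bar m) m \<alpha> = counit \<alpha>" using om by (simp add: odd_fn_def)
      then have "cv (bar m) m \<alpha> = 0" using less.prems cu by (simp only: conv_cv if_True)
      then have E2: "(-1) ^ sum_list \<alpha> * m \<alpha> + m \<alpha> + S2 = 0"
        using cv_split[OF False, of "bar m" m] by (simp only: bm m0 S2_def mult_1_right mult_1_left)
      have "conv (bar M) M \<alpha> = counit \<alpha>" using oM by (simp add: odd_fn_def)
      then have "cv (bar M) M \<alpha> = 0" using less.prems cu by (simp only: conv_cv if_True)
      then have E2': "(-1) ^ sum_list \<alpha> * M \<alpha> + M \<alpha> + S2 = 0"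
        using cv_split[OF False, of "bar M" M] by (simp only: bm M0 S2' mult_1_right mult_1_left)
      have "bar p \<alpha> = p \<alpha>" using ep unfolding even_fn_def by simp
      then have E3: "(-1) ^ sum_list \<alpha> * p \<alpha> = p \<alpha>" unfolding bar_def .
      have "bar P \<alpha> = P \<alpha>" using eP unfolding even_fn_def by simp
      then have E3': "(-1) ^ sum_list \<alpha> * P \<alpha> = P \<alpha>" unfolding bar_def .
      have E1E1: "p \<alpha> + m \<alpha> + S1 = P \<alpha> + M \<alpha> + S1" by (rule trans[OF E1 E1'[symmetric]])
      show ?thesis
      proof (cases "even (sum_list \<alpha>)")
        case True
        have s: "(-1::'a) ^ sum_list \<alpha> = 1" by (rule neg_one_even_power[OF True])
        have h1: "2 * m \<alpha> + S2 = 0" using E2 unfolding s mult_1_left mult_2 .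
        have h2: "2 * M \<alpha> + S2 = 0" using E2' unfolding s mult_1_left mult_2 .
        have "2 * m \<alpha> + S2 = 2 * M \<alpha> + S2" by (rule trans[OF h1 h2[symmetric]])
        then have "2 * m \<alpha> = 2 * M \<alpha>" by (simp only: add_right_cancel)
        then have mM: "m \<alpha> = M \<alpha>" using two by simp
        have "p \<alpha> + M \<alpha> + S1 = P \<alpha> + M \<alpha> + S1" using E1E1 unfolding mM .
        then have "p \<alpha> = P \<alpha>" by (simp only: add_right_cancel)
        then show ?thesis using mM by (rule conjI)
      next
        case False
        then have odd: "odd (sum_list \<alpha>)" by simp
        have s: "(-1::'a) ^ sum_list \<alpha> = -1" by (rule neg_one_odd_power[OF odd])
        have hp: "- p \<alpha> = p \<alpha>" using E3 unfolding s mult_minus1 .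
        have "p \<alpha> + p \<alpha> = 0" by (metis hp add.left_inverse)
        then have "2 * p \<alpha> = 0" by (simp only: mult_2)
        then have p0': "p \<alpha> = 0" using two by simp
        have hP: "- P \<alpha> = P \<alpha>" using E3' unfolding s mult_minus1 .
        have "P \<alpha> + P \<alpha> = 0" by (metis hP add.left_inverse)
        then have "2 * P \<alpha> = 0" by (simp only: mult_2)
        then have P0': "P \<alpha> = 0" using two by simp
        have "0 + m \<alpha> + S1 = 0 + M \<alpha> + S1" using E1E1 unfolding p0' P0' .
        then have "m \<alpha> = M \<alpha>" by (simp only: add_right_cancel add_0_left)
        then show ?thesis using p0' P0' by simp
      qed
    qed
  qed
  have fp: "functional p" "functional m" "functional P" "functional M"
    using cp cm cP cM by (simp_all add: character_def)
  show ?thesis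
  proof (intro conjI ext)
    fix \<alpha> show "p \<alpha> = P \<alpha>" using main fp by (cases "is_comp \<alpha>") (auto simp: functional_def)
  next
    fix \<alpha> show "m \<alpha> = M \<alpha>" using main fp by (cases "is_comp \<alpha>") (auto simp: functional_def)
  qed
qed

lemma Wf_cong: "(\<And>r. u r = v r) \<Longrightarrow> Wf u = Wf v" by (metis ext)
lemma Vf_cong: "(\<And>r. u r = v r) \<Longrightarrow> Vf u = Vf v" by (metis ext)

lemma factors_zeta_inv:
  assumes two: "(2::'a::field) \<noteq> 0"
  shows "even_odd_factors (conv_inv (zeta :: nat list \<Rightarrow> 'a)) = (Vf pp, Wf mm)"
proof -
  let ?M = "Wf mm :: nat list \<Rightarrow> 'a"
  let ?P = "Vf pp :: nat list \<Rightarrow> 'a"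
  let ?X = "conv (bar zeta) V1 :: nat list \<Rightarrow> 'a"
  have X: "character ?X" by (intro character_conv character_bar character_zeta character_V1)
  have MM: "conv ?M ?M = ?X" unfolding conv_WW chi_Wf by (rule Wf_cong) (rule N1[OF two])
  have cM: "character ?M"
    by (rule sqrt_character[OF two X functional_Wf _ MM]) (simp add: Wf_def mm_def cc_def)
  have barM: "bar ?M = Wf mm'" unfolding bar_Wf by (rule Wf_cong) (simp add: mm_def mm'_def)
  have Pdef: "?P = conv V1 (bar ?M)" unfolding barM conv_VW by (rule Vf_cong) (simp add: N4)
  have cP: "character ?P" unfolding Pdef by (intro character_conv character_V1 character_bar cM)
  have eP: "even_fn ?P" unfolding even_fn_def bar_Vf by (rule Vf_cong) (simp add: pp_def)
  have oM: "odd_fn ?M" unfolding odd_fn_def barM conv_WW counit_Wf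
    by (intro conjI Wf_cong) (simp_all add: N3[OF two] cauchy_commute[of mm mm'])
  have PM: "conv ?P ?M = conv_inv zeta" unfolding conv_VW conv_inv_zeta
    by (rule Vf_cong) (simp add: N2[OF two])
  show ?thesis unfolding even_odd_factors_def
  proof (rule the_equality)
    show "case (?P, ?M) of (p, m) \<Rightarrow> character p \<and> character m \<and> even_fn p \<and> odd_fn m \<and> conv p m = conv_inv zeta"
      using cP cM eP oM PM by simp
    fix x :: "(nat list \<Rightarrow> 'a) \<times> (nat list \<Rightarrow> 'a)"
    assume h: "case x of (p, m) \<Rightarrow> character p \<and> character m \<and> even_fn p \<and> odd_fn m \<and> conv p m = conv_inv zeta"
    obtain p m where x: "x = (p, m)" by (cases x)
    have "p = ?P \<and> m = ?M"
      using h x by (intro factor_unique[OF two _ _ _ _ _ cP cM eP oM PM]) auto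
    then show "x = (?P, ?M)" using x by simp
  qed
qed

lemma Ccoef0: "Ccoef 0 q = (of_nat ((2*q) choose q) :: 'a::field)"
proof -
  have "fact q * fact (2*q - q) * ((2*q) choose q) = (fact (2*q) :: nat)"
    by (rule binomial_fact_lemma) simp
  then have "fact (2*q) div (fact q * fact q) = ((2*q) choose q)"
    by (metis diff_add_inverse2 mult_2 fact_nonzero mult_eq_0_iff nonzero_mult_div_cancel_left)
  then show ?thesis by (simp add: Ccoef_def)
qed

theorem theorem8p4:
  fixes \<alpha> :: "nat list"
  assumes char_ne_2: "(2::'a::field) \<noteq> 0"
    and comp: "is_comp \<alpha>"
  shows "odd_part (conv_inv (zeta :: nat list \<Rightarrow> 'a)) \<alpha> =
           (if \<alpha> = [] \<or> odd (hd \<alpha>)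
            then (-1) ^ length \<alpha> / 2 ^ (2 * (k_odd \<alpha> div 2)) * Ccoef 0 (k_odd \<alpha> div 2)
            else 0) \<and>
         even_part (conv_inv (zeta :: nat list \<Rightarrow> 'a)) \<alpha> =
           (if even (sum_list \<alpha>)
            then (-1) ^ length \<alpha> / 2 ^ k_odd \<alpha> * Ccoef 0 (k_odd \<alpha> div 2)
            else 0)"
proof
  have F: "even_odd_factors (conv_inv (zeta :: nat list \<Rightarrow> 'a)) = (Vf pp, Wf mm)"
    by (rule factors_zeta_inv[OF char_ne_2])
  show "odd_part (conv_inv (zeta :: nat list \<Rightarrow> 'a)) \<alpha> =
           (if \<alpha> = [] \<or> odd (hd \<alpha>)
            then (-1) ^ length \<alpha> / 2 ^ (2 * (k_odd \<alpha> div 2)) * Ccoef 0 (k_odd \<alpha> div 2)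
            else 0)"
    unfolding odd_part_def F using comp by (simp add: Wf_def mm_def cc_def Ccoef0)
  have k: "even (k_odd \<alpha>) \<Longrightarrow> 2 * (k_odd \<alpha> div 2) = k_odd \<alpha>" by simp
  show "even_part (conv_inv (zeta :: nat list \<Rightarrow> 'a)) \<alpha> =
           (if even (sum_list \<alpha>)
            then (-1) ^ length \<alpha> / 2 ^ k_odd \<alpha> * Ccoef 0 (k_odd \<alpha> div 2)
            else 0)"
    unfolding even_part_def F using comp k by (simp add: Vf_def pp_def cc_def Ccoef0 even_sum_k_odd)
qed

end
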